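(* Let $k$ be a positive integer and $n_0,\ldots,n_{k-1}$ positive integers, with indices read modulo $k$. For each $j\in\{0,\ldots,k-1\}$ let $A^{(j)}$ be a real $n_j\times n_{j+1}$ matrix, and let $A=A^{(0)}A^{(1)}\cdots A^{(k-1)}$ (an $n_0\times n_0$ matrix). If the signed digraph $G=G_{A^{(0)}\cdots A^{(k-1)}}$ is e-cycle-free, then $A$ is a $P_0$-matrix.
   Context: Indices $j$ are taken modulo $k$ (so $n_k=n_0$ and $A^{(k-1)}$ is $n_{k-1}\times n_0$). The signed digraph $G=G_{A^{(0)}\cdots A^{(k-1)}}$ has vertex set the disjoint union of sets $V_0,\ldots,V_{k-1}$ with $V_j=\{V_j^1,\ldots,V_j^{n_j}\}$; there is a directed edge from $V_j^r$ to $V_{j+1}^s$ if and only if $(A^{(j)})_{rs}\neq 0$, and this edge has sign equal to the sign of $(A^{(j)})_{rs}$; there are no other edges (when $k=1$ this means an edge from $V_0^r$ to $V_0^s$, possibly a loop, iff $(A^{(0)})_{rs}\ne 0$). Every directed cycle in $G$ has length a multiple of $k$. A directed cycle with $kr_1$ edges, of which $r_2$ are negative, is an e-cycle if $(-1)^{r_1+r_2}=1$ and an o-cycle otherwise. $G$ is e-cycle-free if it contains no e-cycle. A $P_0$-matrix is a real square matrix all of whose principal minors are nonnegative. *)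

theory Defs
  imports "Jordan_Normal_Form.Determinant" "Jordan_Normal_Form.DL_Submatrix"
begin

definition P0_matrix :: "real mat \<Rightarrow> bool" where
  "P0_matrix A \<longleftrightarrow> A \<in> carrier_mat (dim_row A) (dim_row A) \<and>
     (\<forall>I. I \<subseteq> {0..<dim_row A} \<longrightarrow> det (submatrix A I I) \<ge> 0)"

definition cyclic_chain :: "real mat list \<Rightarrow> bool" where
  "cyclic_chain As \<longleftrightarrow> length As \<ge> 1 \<and>
     (\<forall>j < length As. dim_row (As ! j) > 0 \<and>
        dim_col (As ! j) = dim_row (As ! ((j + 1) mod length As)))"

text \<open>Vertices of the signed digraph: pairs (j, r) standing for V_j^r, j < k, r < n_j.\<close>
definition sd_vertex :: "real mat list \<Rightarrow> nat \<times> nat \<Rightarrow> bool" where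
  "sd_vertex As v \<longleftrightarrow> fst v < length As \<and> snd v < dim_row (As ! fst v)"

definition sd_weight :: "real mat list \<Rightarrow> nat \<times> nat \<Rightarrow> nat \<times> nat \<Rightarrow> real" where
  "sd_weight As v w = (As ! fst v) $$ (snd v, snd w)"

definition sd_edge :: "real mat list \<Rightarrow> nat \<times> nat \<Rightarrow> nat \<times> nat \<Rightarrow> bool" where
  "sd_edge As v w \<longleftrightarrow> sd_vertex As v \<and> sd_vertex As w \<and>
     fst w = (fst v + 1) mod length As \<and> sd_weight As v w \<noteq> 0"

definition sd_cycle :: "real mat list \<Rightarrow> (nat \<times> nat) list \<Rightarrow> bool" where
  "sd_cycle As vs \<longleftrightarrow> vs \<noteq> [] \<and> distinct vs \<and>
     (\<forall>i < length vs. sd_edge As (vs ! i) (vs ! ((i + 1) mod length vs)))"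

definition sd_neg_edges :: "real mat list \<Rightarrow> (nat \<times> nat) list \<Rightarrow> nat" where
  "sd_neg_edges As vs = card {i. i < length vs \<and>
      sd_weight As (vs ! i) (vs ! ((i + 1) mod length vs)) < 0}"

text \<open>e-cycle: k r1 edges, r2 negative, (-1)^(r1+r2) = 1.\<close>
definition e_cycle :: "real mat list \<Rightarrow> (nat \<times> nat) list \<Rightarrow> bool" where
  "e_cycle As vs \<longleftrightarrow> sd_cycle As vs \<and>
     (-1::int) ^ (length vs div length As + sd_neg_edges As vs) = 1"

definition e_cycle_free :: "real mat list \<Rightarrow> bool" where
  "e_cycle_free As \<longleftrightarrow> \<not> (\<exists>vs. e_cycle As vs)"

end

theory Submission
  imports Defs "HOL-Combinatorics.Cycles"
begin


lemma sign_cycle_of_list: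
  "distinct cs \<Longrightarrow> sign (cycle_of_list cs) = (-1) ^ (length cs - 1)"
proof (induction cs rule: cycle_of_list.induct)
  case (1 i j cs)
  have "sign (cycle_of_list (i # j # cs)) = sign (transpose i j) * sign (cycle_of_list (j # cs))"
    by (simp add: sign_compose permutation_swap_id permutation_of_cycle)
  also have "\<dots> = - ((-1) ^ (length (j#cs) - 1))" using 1 by (simp add: sign_swap_id)
  finally show ?case by (simp add: o_def)
qed auto

lemma support_props:
  assumes "permutation p"
  shows "\<And>i. i < least_power p a \<Longrightarrow> p (support p a ! i) = support p a ! ((i+1) mod least_power p a)"
proof -
  fix i assume i: "i < least_power p a"
  note lp = least_power_of_permutation[OF assms, of a]
  show "p (support p a ! i) = support p a ! ((i+1) mod least_power p a)"
  proof (cases "i + 1 = least_power p a")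
    case True
    then have "(i+1) mod least_power p a = 0" by simp
    moreover have "p ((p ^^ i) a) = a" using lp(1) True
      by (metis funpow.simps(2) o_apply Suc_eq_plus1)
    ultimately show ?thesis using i lp(2) by simp
  next
    case False
    then have "i+1 < least_power p a" using i by simp
    then show ?thesis using i by simp
  qed
qed

lemma termwise_sign:
  fixes X :: "nat \<Rightarrow> nat \<Rightarrow> real" and g :: "nat \<Rightarrow> bool"
  assumes "finite S" "p permutes S"
  and hyp: "\<And>cs. cs \<noteq> [] \<Longrightarrow> distinct cs \<Longrightarrow> set cs \<subseteq> S \<Longrightarrow>
     (\<forall>i<length cs. X (cs!i) (cs!((i+1) mod length cs)) \<noteq> 0) \<Longrightarrow>
     0 \<le> (-1)^(length cs - 1) * (\<Prod>i<length cs. X (cs!i) (cs!((i+1) mod length cs)))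
          * (-1)^(card {i. i < length cs \<and> g (cs!i)})"
  shows "0 \<le> of_int (sign p) * (\<Prod>x\<in>S. X x (p x)) * (-1)^(card {x\<in>S. g x})"
  using assms
proof (induction "card S" arbitrary: S p rule: less_induct)
  case less
  show ?case
  proof (cases "S = {}")
    case True
    then have "p = id" using less(3) by (simp add: permutes_empty)
    then show ?thesis using True by simp
  next
    case False
    then obtain a where aS: "a \<in> S" by blast
    have perm: "permutation p" using less(2,3) permutation_permutes by blast
    define c where "c = support p a"
    define L where "L = least_power p a"
    define T where "T = S - set c"
    define q where "q = (\<lambda>y. if y \<in> T then p y else y)"
    have lc: "length c = L" unfolding c_def L_def by simp
    have Lpos: "L > 0" unfolding L_def using least_power_of_permutation[OF perm] by simp
    have dc: "distinct c" unfolding c_def using cycle_of_permutation[OF perm] .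
    have c0: "c ! 0 = a" unfolding c_def using Lpos L_def by simp
    have cS: "set c \<subseteq> S"
    proof
      fix x assume "x \<in> set c"
      then obtain i where "x = (p ^^ i) a" unfolding c_def by auto
      then show "x \<in> S" using permutes_in_image[OF permutes_funpow[OF less(3)]] aS by simp
    qed
    have qperm: "q permutes T" unfolding q_def T_def c_def
      using semidecomposition[OF less(3) less(2)] .
    have pq: "p = cycle_of_list c \<circ> q"
    proof
      fix y
      show "p y = (cycle_of_list c \<circ> q) y"
      proof (cases "y \<in> set c")
        case True
        then have "q y = y" unfolding q_def T_def by simp
        then show ?thesis using cycle_restrict[OF perm, of y a] True unfolding c_def by simp
      next
        case nc: False
        show ?thesis
        proof (cases "y \<in> S")
          case True
          then have yT: "y \<in> T" using nc T_def by simp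
          then have "q y \<in> T" using qperm permutes_in_image by metis
          then have "q y \<notin> set c" unfolding T_def by simp
          then show ?thesis using yT q_def by (simp add: id_outside_supp)
        next
          case False
          then have "p y = y" using less(3) permutes_not_in by metis
          moreover have "q y = y" using False T_def q_def by simp
          ultimately show ?thesis using nc id_outside_supp[of y c] by simp
        qed
      qed
    qed
    have sgn: "sign p = (-1)^(L - 1) * sign q"
      using pq sign_compose[OF permutation_of_cycle, of q c] qperm less(2) T_def
        sign_cycle_of_list[OF dc] lc
      by (metis finite_Diff permutation_permutes)
    have Tfin: "finite T" using less(2) T_def by simp
    have cardT: "card T < card S"
    proof -
      have "a \<in> set c" using c0 Lpos lc by (metis nth_mem)
      then have "T \<subset> S" using T_def aS cS by blast
      then show ?thesis using less(2) psubset_card_mono by blast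
    qed
    have IH: "0 \<le> of_int (sign q) * (\<Prod>x\<in>T. X x (q x)) * (-1)^(card {x\<in>T. g x})"
    proof (rule less(1)[OF cardT Tfin qperm])
      fix cs :: "nat list" assume "cs \<noteq> []" "distinct cs" "set cs \<subseteq> T"
        "\<forall>i<length cs. X (cs!i) (cs!((i+1) mod length cs)) \<noteq> 0"
      then show "0 \<le> (-1)^(length cs - 1) * (\<Prod>i<length cs. X (cs!i) (cs!((i+1) mod length cs)))
          * (-1)^(card {i. i < length cs \<and> g (cs!i)})"
        using less(4)[of cs] T_def by auto
    qed
    have pc: "\<And>i. i < L \<Longrightarrow> p (c ! i) = c ! ((i+1) mod L)"
      using support_props[OF perm] unfolding c_def L_def by blast
    have S_split: "S = set c \<union> T" "set c \<inter> T = {}" using cS T_def by auto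
    have prodS: "(\<Prod>x\<in>S. X x (p x)) = (\<Prod>x\<in>set c. X x (p x)) * (\<Prod>x\<in>T. X x (q x))"
    proof -
      have "(\<Prod>x\<in>S. X x (p x)) = (\<Prod>x\<in>set c. X x (p x)) * (\<Prod>x\<in>T. X x (p x))"
        using S_split Tfin by (simp add: prod.union_disjoint)
      moreover have "(\<Prod>x\<in>T. X x (p x)) = (\<Prod>x\<in>T. X x (q x))"
        by (rule prod.cong) (auto simp: q_def)
      ultimately show ?thesis by simp
    qed
    have prodc: "(\<Prod>x\<in>set c. X x (p x)) = (\<Prod>i<L. X (c!i) (c!((i+1) mod L)))"
    proof -
      have "(\<Prod>x\<in>set c. X x (p x)) = (\<Prod>i<L. X (c!i) (p (c!i)))"
      proof -
        have e: "set c = (\<lambda>i. c!i) ` {..<L}" using lc by (auto simp: set_conv_nth)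
        have "inj_on (\<lambda>i. c!i) {..<L}" using dc lc by (simp add: inj_on_def nth_eq_iff_index_eq)
        then show ?thesis unfolding e by (simp add: prod.reindex)
      qed
      also have "\<dots> = (\<Prod>i<L. X (c!i) (c!((i+1) mod L)))"
        by (rule prod.cong) (auto simp: pc)
      finally show ?thesis .
    qed
    have cardg: "card {x\<in>S. g x} = card {i. i < L \<and> g (c!i)} + card {x\<in>T. g x}"
    proof -
      have "{x\<in>S. g x} = {x\<in>set c. g x} \<union> {x\<in>T. g x}" using S_split by auto
      then have "card {x\<in>S. g x} = card {x\<in>set c. g x} + card {x\<in>T. g x}"
        using S_split Tfin by (simp add: card_Un_disjoint disjoint_iff)
      moreover have "card {x\<in>set c. g x} = card {i. i < L \<and> g (c!i)}"
      proof -
        have "{x\<in>set c. g x} = (\<lambda>i. c!i) ` {i. i < L \<and> g (c!i)}"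
          using lc by (auto simp: set_conv_nth)
        moreover have "inj_on (\<lambda>i. c!i) {i. i < L \<and> g (c!i)}"
          using dc lc by (auto simp: inj_on_def nth_eq_iff_index_eq)
        ultimately show ?thesis by (simp add: card_image)
      qed
      ultimately show ?thesis by simp
    qed
    show ?thesis
    proof (cases "\<forall>i<L. X (c!i) (c!((i+1) mod L)) \<noteq> 0")
      case False
      then have "(\<Prod>i<L. X (c!i) (c!((i+1) mod L))) = 0" by auto
      then have "(\<Prod>x\<in>S. X x (p x)) = 0" using prodS prodc by simp
      then show ?thesis by simp
    next
      case True
      have cne: "c \<noteq> []" using Lpos lc by auto
      have H: "0 \<le> (-1)^(L - 1) * (\<Prod>i<L. X (c!i) (c!((i+1) mod L))) * (-1)^(card {i. i < L \<and> g (c!i)})"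
        using less(4)[OF cne dc cS] True lc by simp
      have "of_int (sign p) * (\<Prod>x\<in>S. X x (p x)) * (-1)^(card {x\<in>S. g x}) =
         ((-1)^(L - 1) * (\<Prod>i<L. X (c!i) (c!((i+1) mod L))) * (-1)^(card {i. i < L \<and> g (c!i)}))
         * (of_int (sign q) * (\<Prod>x\<in>T. X x (q x)) * (-1)^(card {x\<in>T. g x}))"
        by (simp add: sgn prodS prodc cardg power_add)
      then show ?thesis using H IH by simp
    qed
  qed
qed



lemma det_block_id:
  fixes W Y Z :: "real mat"
  assumes W: "W \<in> carrier_mat n n" and Y: "Y \<in> carrier_mat n m" and Z: "Z \<in> carrier_mat m n"
  shows "det (four_block_mat (W + Y * Z) Y Z (1\<^sub>m m)) = det W"
proof -
  let ?M = "four_block_mat (W + Y * Z) Y Z (1\<^sub>m m)"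
  let ?E = "four_block_mat (1\<^sub>m n) (- Y) (0\<^sub>m m n) (1\<^sub>m m)"
  have YZ: "Y * Z \<in> carrier_mat n n" using Y Z by simp
  have WYZ: "W + Y * Z \<in> carrier_mat n n" using W YZ by simp
  have "?E * ?M = four_block_mat (1\<^sub>m n * (W + Y * Z) + (- Y) * Z) (1\<^sub>m n * Y + (- Y) * 1\<^sub>m m)
      (0\<^sub>m m n * (W + Y * Z) + 1\<^sub>m m * Z) (0\<^sub>m m n * Y + 1\<^sub>m m * 1\<^sub>m m)"
    by (rule mult_four_block_mat, insert W Y Z WYZ, auto)
  also have "1\<^sub>m n * (W + Y * Z) + (- Y) * Z = W"
    using W Y Z WYZ by (intro eq_matI) auto
  also have "1\<^sub>m n * Y + (- Y) * 1\<^sub>m m = 0\<^sub>m n m" using Y by (intro eq_matI) auto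
  also have "0\<^sub>m m n * (W + Y * Z) + 1\<^sub>m m * Z = Z" using Z WYZ by (intro eq_matI) auto
  also have "0\<^sub>m m n * Y + 1\<^sub>m m * 1\<^sub>m m = 1\<^sub>m m" using Y by (intro eq_matI) auto
  finally have EM: "?E * ?M = four_block_mat W (0\<^sub>m n m) Z (1\<^sub>m m)" .
  have "det (?E * ?M) = det ?E * det ?M"
    by (rule det_mult[of _ "n+m"], insert W Y Z WYZ, auto)
  moreover have "det ?E = 1"
    by (subst det_four_block_mat_lower_left_zero[of _ n _ m], insert Y, auto)
  moreover have "det (?E * ?M) = det W"
    unfolding EM by (subst det_four_block_mat_upper_right_zero[of _ n _ m], insert W Z, auto)
  ultimately show ?thesis by simp
qed

fun lay :: "nat list \<Rightarrow> nat \<Rightarrow> nat \<times> nat" where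
  "lay [] i = (0, i)"
| "lay (d # ds) i = (if i < d then (0, i) else (Suc (fst (lay ds (i - d))), snd (lay ds (i - d))))"

lemma lay_bound: "i < sum_list ds \<Longrightarrow> fst (lay ds i) < length ds \<and> snd (lay ds i) < ds ! fst (lay ds i)"
  by (induction ds arbitrary: i) auto

lemma lay_inj: "i < sum_list ds \<Longrightarrow> j < sum_list ds \<Longrightarrow> lay ds i = lay ds j \<Longrightarrow> i = j"
proof (induction ds arbitrary: i j)
  case (Cons d ds)
  show ?case
  proof (cases "i < d")
    case True
    then show ?thesis using Cons.prems by (auto split: if_splits)
  next
    case False
    then have jd: "\<not> j < d" using Cons.prems by (auto split: if_splits)
    have "lay ds (i - d) = lay ds (j - d)" using Cons.prems False jd by (auto simp: prod_eq_iff)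
    then have "i - d = j - d" using Cons.IH[of "i-d" "j-d"] Cons.prems False jd by auto
    then show ?thesis using False jd by simp
  qed
qed auto

lemma lay_app1: "i < sum_list ds \<Longrightarrow> lay (ds @ [d]) i = lay ds i"
  by (induction ds arbitrary: i) auto

lemma lay_app2: "sum_list ds \<le> i \<Longrightarrow> i < sum_list ds + d \<Longrightarrow> lay (ds @ [d]) i = (length ds, i - sum_list ds)"
  by (induction ds arbitrary: i) auto

lemma lay0_card: "ds \<noteq> [] \<Longrightarrow> card {i. i < sum_list ds \<and> fst (lay ds i) = 0} = hd ds"
proof (cases ds)
  case (Cons d ds')
  then have "{i. i < sum_list ds \<and> fst (lay ds i) = 0} = {..<d}" by auto
  then show ?thesis using Cons by simp
qed simp



definition chn :: "real mat list \<Rightarrow> bool" where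
  "chn Bs \<longleftrightarrow> (\<forall>j. Suc j < length Bs \<longrightarrow> dim_col (Bs!j) = dim_row (Bs ! Suc j)) \<and>
     dim_col (last Bs) = dim_row (hd Bs)"

definition Gm :: "real mat list \<Rightarrow> real mat" where
  "Gm Bs = mat (sum_list (map dim_row Bs)) (sum_list (map dim_row Bs)) (\<lambda>(i,j).
     (if i = j \<and> fst (lay (map dim_row Bs) i) \<noteq> 0 then 1 else 0) -
     (if fst (lay (map dim_row Bs) j) = Suc (fst (lay (map dim_row Bs) i)) mod length Bs
      then (Bs ! fst (lay (map dim_row Bs) i)) $$ (snd (lay (map dim_row Bs) i), snd (lay (map dim_row Bs) j))
      else 0))"

lemma Gm_carrier: "Gm Bs \<in> carrier_mat (sum_list (map dim_row Bs)) (sum_list (map dim_row Bs))"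
  unfolding Gm_def by simp

lemma Gm_entry: "i < sum_list (map dim_row Bs) \<Longrightarrow> j < sum_list (map dim_row Bs) \<Longrightarrow>
  Gm Bs $$ (i,j) = (if i = j \<and> fst (lay (map dim_row Bs) i) \<noteq> 0 then 1 else 0) -
     (if fst (lay (map dim_row Bs) j) = Suc (fst (lay (map dim_row Bs) i)) mod length Bs
      then (Bs ! fst (lay (map dim_row Bs) i)) $$ (snd (lay (map dim_row Bs) i), snd (lay (map dim_row Bs) j))
      else 0)"
  unfolding Gm_def by simp

lemma Gm_single: "dim_col B = dim_row B \<Longrightarrow> Gm [B] = - B"
  by (intro eq_matI) (auto simp: Gm_def)

lemma det_neg: fixes B :: "real mat" shows "dim_col B = dim_row B \<Longrightarrow> det (- B) = (-1) ^ dim_row B * det B"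
proof -
  assume d: "dim_col B = dim_row B"
  have "- B = (-1) \<cdot>\<^sub>m B" by (intro eq_matI) auto
  then show ?thesis using d by simp
qed

definition Ymat :: "real mat list \<Rightarrow> real mat \<Rightarrow> real mat \<Rightarrow> real mat" where
  "Ymat Bs B C = mat (sum_list (map dim_row (Bs @ [B]))) (dim_row C) (\<lambda>(i,j).
     if fst (lay (map dim_row (Bs @ [B])) i) = length Bs then - B $$ (snd (lay (map dim_row (Bs @ [B])) i), j) else 0)"

definition Zmat :: "real mat list \<Rightarrow> real mat \<Rightarrow> real mat \<Rightarrow> real mat" where
  "Zmat Bs B C = mat (dim_row C) (sum_list (map dim_row (Bs @ [B]))) (\<lambda>(i,j).
     if fst (lay (map dim_row (Bs @ [B])) j) = 0 then - C $$ (i, snd (lay (map dim_row (Bs @ [B])) j)) else 0)"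

lemma YZ_entry:
  assumes ch: "chn (Bs @ [B, C])"
    and i: "i < sum_list (map dim_row (Bs @ [B]))" and j: "j < sum_list (map dim_row (Bs @ [B]))"
  shows "(Ymat Bs B C * Zmat Bs B C) $$ (i,j) =
    (if fst (lay (map dim_row (Bs @ [B])) i) = length Bs \<and> fst (lay (map dim_row (Bs @ [B])) j) = 0
     then (B * C) $$ (snd (lay (map dim_row (Bs @ [B])) i), snd (lay (map dim_row (Bs @ [B])) j)) else 0)"
proof -
  let ?ds = "map dim_row (Bs @ [B])"
  obtain a r where ar: "lay ?ds i = (a, r)" by (cases "lay ?ds i")
  obtain b s where bs: "lay ?ds j = (b, s)" by (cases "lay ?ds j")
  have abnd: "a < length ?ds" "r < ?ds ! a" using lay_bound[OF i] ar by auto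
  have bbnd: "b < length ?ds" "s < ?ds ! b" using lay_bound[OF j] bs by auto
  have colB: "dim_col B = dim_row C"
    using ch unfolding chn_def by (auto simp: nth_append dest: spec[of _ "length Bs"])
  have colC: "dim_col C = dim_row (hd (Bs @ [B]))"
    using ch unfolding chn_def by (cases Bs) auto
  have e: "(Ymat Bs B C * Zmat Bs B C) $$ (i,j) =
      (\<Sum>l<dim_row C. Ymat Bs B C $$ (i,l) * Zmat Bs B C $$ (l,j))"
    using i j by (simp add: Ymat_def Zmat_def scalar_prod_def atLeast0LessThan)
  show ?thesis
  proof (cases "a = length Bs \<and> b = 0")
    case True
    have r: "r < dim_row B" using abnd True by (simp add: nth_append)
    have s: "s < dim_col C" using bbnd True colC by (cases Bs) auto
    have "(\<Sum>l<dim_row C. Ymat Bs B C $$ (i,l) * Zmat Bs B C $$ (l,j)) = (\<Sum>l<dim_row C. B $$ (r,l) * C $$ (l,s))"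
      using i j ar bs True by (intro sum.cong) (auto simp: Ymat_def Zmat_def)
    also have "\<dots> = (B * C) $$ (r, s)"
      using r s colB by (simp add: scalar_prod_def atLeast0LessThan)
    finally show ?thesis using e True ar bs by simp
  next
    case False
    have "(\<Sum>l<dim_row C. Ymat Bs B C $$ (i,l) * Zmat Bs B C $$ (l,j)) = 0"
      using i j ar bs False by (intro sum.neutral) (auto simp: Ymat_def Zmat_def)
    then show ?thesis using e False ar bs by auto
  qed
qed

lemma Gm_peel:
  assumes ch: "chn (Bs @ [B, C])"
  shows "Gm (Bs @ [B, C]) = four_block_mat (Gm (Bs @ [B * C]) + Ymat Bs B C * Zmat Bs B C)
            (Ymat Bs B C) (Zmat Bs B C) (1\<^sub>m (dim_row C))"
proof -
  let ?ds = "map dim_row (Bs @ [B])"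
  let ?n = "sum_list ?ds"
  let ?t = "length Bs"
  have dsBC: "map dim_row (Bs @ [B * C]) = ?ds" by simp
  have ds2: "map dim_row (Bs @ [B, C]) = ?ds @ [dim_row C]" by simp
  have colB: "dim_col B = dim_row C"
    using ch unfolding chn_def by (auto simp: nth_append dest: spec[of _ "length Bs"])
  have colC: "dim_col C = dim_row (hd (Bs @ [B]))"
    using ch unfolding chn_def by (cases Bs) auto
  have lay1: "\<And>i. i < ?n \<Longrightarrow> lay (map dim_row (Bs @ [B, C])) i = lay ?ds i"
    unfolding ds2 by (rule lay_app1)
  have lay2: "\<And>i. ?n \<le> i \<Longrightarrow> i < ?n + dim_row C \<Longrightarrow> lay (map dim_row (Bs @ [B, C])) i = (Suc ?t, i - ?n)"
    unfolding ds2 by (subst lay_app2) auto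
  show ?thesis
  proof (rule eq_matI)
    show "dim_row (Gm (Bs @ [B, C])) = dim_row (four_block_mat (Gm (Bs @ [B * C]) + Ymat Bs B C * Zmat Bs B C)
            (Ymat Bs B C) (Zmat Bs B C) (1\<^sub>m (dim_row C)))"
      by (simp add: Gm_def Ymat_def Zmat_def)
    show "dim_col (Gm (Bs @ [B, C])) = dim_col (four_block_mat (Gm (Bs @ [B * C]) + Ymat Bs B C * Zmat Bs B C)
            (Ymat Bs B C) (Zmat Bs B C) (1\<^sub>m (dim_row C)))"
      by (simp add: Gm_def Ymat_def Zmat_def)
    fix i j
    assume "i < dim_row (four_block_mat (Gm (Bs @ [B * C]) + Ymat Bs B C * Zmat Bs B C)
            (Ymat Bs B C) (Zmat Bs B C) (1\<^sub>m (dim_row C)))"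
      "j < dim_col (four_block_mat (Gm (Bs @ [B * C]) + Ymat Bs B C * Zmat Bs B C)
            (Ymat Bs B C) (Zmat Bs B C) (1\<^sub>m (dim_row C)))"
    then have i: "i < ?n + dim_row C" and j: "j < ?n + dim_row C"
      by (simp_all add: Gm_def Ymat_def Zmat_def)
    have iG: "i < sum_list (map dim_row (Bs @ [B, C]))" and jG: "j < sum_list (map dim_row (Bs @ [B, C]))"
      using i j by simp_all
    have RHS: "four_block_mat (Gm (Bs @ [B * C]) + Ymat Bs B C * Zmat Bs B C)
            (Ymat Bs B C) (Zmat Bs B C) (1\<^sub>m (dim_row C)) $$ (i,j) =
       (if i < ?n then if j < ?n then (Gm (Bs @ [B * C]) + Ymat Bs B C * Zmat Bs B C) $$ (i,j)
          else Ymat Bs B C $$ (i, j - ?n)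
        else if j < ?n then Zmat Bs B C $$ (i - ?n, j) else 1\<^sub>m (dim_row C) $$ (i - ?n, j - ?n))"
      using i j by (simp add: Gm_def Ymat_def Zmat_def del: sum_list_append)
    show "Gm (Bs @ [B, C]) $$ (i, j) = four_block_mat (Gm (Bs @ [B * C]) + Ymat Bs B C * Zmat Bs B C)
            (Ymat Bs B C) (Zmat Bs B C) (1\<^sub>m (dim_row C)) $$ (i, j)"
    proof (cases "i < ?n")
      case iT: True
      obtain a r where ar: "lay ?ds i = (a, r)" by (cases "lay ?ds i")
      have abnd: "a < length ?ds" using lay_bound[OF iT] ar by auto
      then have a_le: "a \<le> ?t" by simp
      show ?thesis
      proof (cases "j < ?n")
        case jT: True
        obtain b s where bs: "lay ?ds j = (b, s)" by (cases "lay ?ds j")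
        have bbnd: "b < length ?ds" using lay_bound[OF jT] bs by auto
        have GBC: "Gm (Bs @ [B * C]) $$ (i,j) = (if i = j \<and> a \<noteq> 0 then 1 else 0) -
             (if b = Suc a mod Suc ?t then ((Bs @ [B * C]) ! a) $$ (r, s) else 0)"
          using Gm_entry[of i "Bs @ [B * C]" j] iT jT ar bs by (simp del: sum_list_append)
        have G2: "Gm (Bs @ [B, C]) $$ (i,j) = (if i = j \<and> a \<noteq> 0 then 1 else 0) -
             (if b = Suc a mod Suc (Suc ?t) then ((Bs @ [B, C]) ! a) $$ (r, s) else 0)"
          using Gm_entry[OF iG jG] lay1[OF iT] lay1[OF jT] ar bs by simp
        have YZ: "(Ymat Bs B C * Zmat Bs B C) $$ (i,j) = (if a = ?t \<and> b = 0 then (B * C) $$ (r,s) else 0)"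
          using YZ_entry[OF ch iT jT] ar bs by simp
        have sumE: "(Gm (Bs @ [B * C]) + Ymat Bs B C * Zmat Bs B C) $$ (i,j) =
            Gm (Bs @ [B * C]) $$ (i,j) + (Ymat Bs B C * Zmat Bs B C) $$ (i,j)"
          using iT jT by (simp add: Gm_def Ymat_def Zmat_def del: sum_list_append)
        show ?thesis
        proof (cases "a = ?t")
          case True
          then show ?thesis using RHS iT jT GBC G2 YZ sumE bbnd by (auto simp: nth_append)
        next
          case False
          then have "a < ?t" using a_le by simp
          then show ?thesis using RHS iT jT GBC G2 YZ sumE by (auto simp: nth_append)
        qed
      next
        case jF: False
        have G2: "Gm (Bs @ [B, C]) $$ (i,j) = -
             (if Suc ?t = Suc a mod Suc (Suc ?t) then ((Bs @ [B, C]) ! a) $$ (r, j - ?n) else 0)"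
          using Gm_entry[OF iG jG] lay1[OF iT] lay2[of j] jF j ar iT by auto
        show ?thesis using RHS iT jF G2 a_le ar j
          by (auto simp: Ymat_def nth_append)
      qed
    next
      case iF: False
      show ?thesis
      proof (cases "j < ?n")
        case jT: True
        obtain b s where bs: "lay ?ds j = (b, s)" by (cases "lay ?ds j")
        have G2: "Gm (Bs @ [B, C]) $$ (i,j) = -
             (if b = Suc (Suc ?t) mod Suc (Suc ?t) then ((Bs @ [B, C]) ! Suc ?t) $$ (i - ?n, s) else 0)"
          using Gm_entry[OF iG jG] lay1[OF jT] lay2[of i] iF i bs jT by auto
        show ?thesis using RHS iF jT G2 bs i
          by (auto simp: Zmat_def nth_append)
      next
        case jF: False
        have G2: "Gm (Bs @ [B, C]) $$ (i,j) = (if i = j then 1 else 0)"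
          using Gm_entry[OF iG jG] lay2[of i] lay2[of j] iF jF i j by auto
        show ?thesis using RHS iF jF G2 i j by auto
      qed
    qed
  qed
qed


lemma chn_merge:
  assumes ch: "chn (Cs @ [B, C])"
  shows "chn (Cs @ [B * C])"
proof -
  have A: "\<And>j. Suc j < Suc (Suc (length Cs)) \<Longrightarrow> dim_col ((Cs @ [B, C])!j) = dim_row ((Cs @ [B, C]) ! Suc j)"
    using ch unfolding chn_def by simp
  have L: "dim_col C = dim_row (hd (Cs @ [B, C]))" using ch unfolding chn_def by simp
  show ?thesis unfolding chn_def
  proof (intro conjI allI impI)
    fix j assume j: "Suc j < length (Cs @ [B * C])"
    then have j': "Suc j \<le> length Cs" by simp
    show "dim_col ((Cs @ [B * C]) ! j) = dim_row ((Cs @ [B * C]) ! Suc j)"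
    proof (cases "Suc j < length Cs")
      case True
      then show ?thesis using A[of j] by (simp add: nth_append)
    next
      case False
      then have "Suc j = length Cs" using j' by simp
      then show ?thesis using A[of j] by (simp add: nth_append)
    qed
  next
    show "dim_col (last (Cs @ [B * C])) = dim_row (hd (Cs @ [B * C]))"
      using L by (cases Cs) auto
  qed
qed

lemma det_Gm: "chn Bs \<Longrightarrow> Bs \<noteq> [] \<Longrightarrow>
  det (Gm Bs) = (-1) ^ (dim_row (hd Bs)) * det (foldr (*) (butlast Bs) (last Bs))"
proof (induction "length Bs" arbitrary: Bs rule: less_induct)
  case less
  obtain Bs' C where BsC: "Bs = Bs' @ [C]" using less(3) rev_exhaust by blast
  show ?case
  proof (cases "Bs' = []")
    case True
    then have sq: "dim_col C = dim_row C" using less(2) BsC unfolding chn_def by simp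
    show ?thesis using True BsC Gm_single[OF sq] det_neg[OF sq] by simp
  next
    case False
    then obtain Cs B where CsB: "Bs' = Cs @ [B]" using rev_exhaust by blast
    have Bs: "Bs = Cs @ [B, C]" using BsC CsB by simp
    have ch: "chn (Cs @ [B, C])" using less(2) Bs by simp
    have colB: "dim_col B = dim_row C"
      using ch unfolding chn_def by (auto simp: nth_append dest: spec[of _ "length Cs"])
    let ?n = "sum_list (map dim_row (Cs @ [B]))"
    have W: "Gm (Cs @ [B * C]) \<in> carrier_mat ?n ?n" using Gm_carrier[of "Cs @ [B * C]"] by simp
    have Y: "Ymat Cs B C \<in> carrier_mat ?n (dim_row C)" unfolding Ymat_def by simp
    have Z: "Zmat Cs B C \<in> carrier_mat (dim_row C) ?n" unfolding Zmat_def by simp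
    have "det (Gm Bs) = det (Gm (Cs @ [B * C]))"
      unfolding Bs Gm_peel[OF ch] by (rule det_block_id[OF W Y Z])
    also have "\<dots> = (-1) ^ (dim_row (hd (Cs @ [B * C]))) * det (foldr (*) (butlast (Cs @ [B * C])) (last (Cs @ [B * C])))"
      using less(1)[of "Cs @ [B * C]"] Bs chn_merge[OF ch] by simp
    also have "dim_row (hd (Cs @ [B * C])) = dim_row (hd Bs)" using Bs by (cases Cs) auto
    also have "foldr (*) (butlast (Cs @ [B * C])) (last (Cs @ [B * C])) = foldr (*) (butlast Bs) (last Bs)"
      using Bs by (simp add: butlast_append)
    finally show ?thesis .
  qed
qed



lemma count_mod:
  fixes k L a :: nat
  assumes k: "k > 0" and dv: "k dvd L"
  shows "card {i. i < L \<and> (a + i) mod k = 0} = L div k"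
proof -
  define c where "c = (k - a mod k) mod k"
  have ck: "c < k" unfolding c_def using k by simp
  have ac: "(a + c) mod k = 0"
  proof (cases "a mod k = 0")
    case True then show ?thesis unfolding c_def by (simp add: mod_add_left_eq[symmetric])
  next
    case False
    then have "c = k - a mod k" unfolding c_def using k by simp
    then have "a mod k + c = k" using k by (simp add: less_imp_le)
    then show ?thesis by (metis mod_add_left_eq mod_self)
  qed
  have eq: "{i. i < L \<and> (a + i) mod k = 0} = (\<lambda>j. c + j * k) ` {..<L div k}"
  proof
    show "{i. i < L \<and> (a + i) mod k = 0} \<subseteq> (\<lambda>j. c + j * k) ` {..<L div k}"
    proof
      fix i assume "i \<in> {i. i < L \<and> (a + i) mod k = 0}"
      then have i: "i < L" "(a + i) mod k = 0" by auto
      have "(a + i) mod k = (a + c) mod k" using i ac by simp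
      then have "i mod k = c mod k"
      proof (cases "c \<le> i")
        case True
        assume h: "(a + i) mod k = (a + c) mod k"
        then have "k dvd (a + i) - (a + c)" using True by (subst mod_eq_dvd_iff_nat[symmetric]) auto
        then have "k dvd i - c" by simp
        then show ?thesis using True by (subst mod_eq_dvd_iff_nat) auto
      next
        case False
        assume h: "(a + i) mod k = (a + c) mod k"
        then have "k dvd (a + c) - (a + i)" using False by (subst mod_eq_dvd_iff_nat[symmetric]) auto
        then have "k dvd c - i" by simp
        then have "c mod k = i mod k" using False by (subst mod_eq_dvd_iff_nat) auto
        then show ?thesis by simp
      qed
      then have im: "i mod k = c" using ck by simp
      have "i = c + (i div k) * k" using im by (metis mod_div_mult_eq add.commute)
      moreover have "i div k < L div k"
        using i(1) dv k by (metis dvd_div_mult_self less_mult_imp_div_less)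
      ultimately show "i \<in> (\<lambda>j. c + j * k) ` {..<L div k}" by blast
    qed
    show "(\<lambda>j. c + j * k) ` {..<L div k} \<subseteq> {i. i < L \<and> (a + i) mod k = 0}"
    proof
      fix x assume "x \<in> (\<lambda>j. c + j * k) ` {..<L div k}"
      then obtain j where j: "j < L div k" "x = c + j * k" by auto
      have "Suc j * k \<le> L div k * k" using j(1) by (metis Suc_leI mult_le_mono1)
      also have "\<dots> = L" using dv by simp
      finally have "x < L" using j(2) ck by simp
      moreover have "(a + x) mod k = 0" using j(2) ac by (simp add: add.assoc[symmetric] mod_add_left_eq)
      ultimately show "x \<in> {i. i < L \<and> (a + i) mod k = 0}" by simp
    qed
  qed
  have "inj_on (\<lambda>j. c + j * k) {..<L div k}" using k by (auto simp: inj_on_def)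
  then show ?thesis unfolding eq by (simp add: card_image)
qed

lemma prod_sign_abs:
  fixes w :: "nat \<Rightarrow> real"
  shows "(\<Prod>i<L. w i) = (-1) ^ card {i. i < L \<and> w i < 0} * (\<Prod>i<L. \<bar>w i\<bar>)"
proof (induction L)
  case 0 then show ?case by simp
next
  case (Suc L)
  have s: "{i. i < Suc L \<and> w i < 0} = {i. i < L \<and> w i < 0} \<union> (if w L < 0 then {L} else {})"
    by (auto simp: less_Suc_eq)
  have c: "card {i. i < Suc L \<and> w i < 0} = card {i. i < L \<and> w i < 0} + (if w L < 0 then 1 else 0)"
    unfolding s by (cases "w L < 0") (auto simp: card_insert_if)
  have wl: "w L = (-1) ^ (if w L < 0 then 1 else 0) * \<bar>w L\<bar>" by (simp add: abs_if)
  have "(\<Prod>i<Suc L. w i) = (\<Prod>i<L. w i) * w L" by simp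
  also have "\<dots> = ((-1) ^ card {i. i < L \<and> w i < 0} * (-1) ^ (if w L < 0 then 1 else 0)) *
       ((\<Prod>i<L. \<bar>w i\<bar>) * \<bar>w L\<bar>)"
    by (subst Suc, subst wl) (simp only: mult_ac)
  also have "\<dots> = (-1) ^ card {i. i < Suc L \<and> w i < 0} * (\<Prod>i<Suc L. \<bar>w i\<bar>)"
    unfolding c power_add by simp
  finally show ?case .
qed



lemma cycle_cond:
  fixes As Bs :: "real mat list" and \<rho> :: "nat \<Rightarrow> nat \<Rightarrow> nat" and cs :: "nat list"
  assumes ef: "e_cycle_free As"
  and len: "length Bs = length As" and kpos: "length As > 0"
  and ch: "chn Bs"
  and vb: "\<And>a r. a < length As \<Longrightarrow> r < dim_row (Bs!a) \<Longrightarrow> \<rho> a r < dim_row (As!a)"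
  and vinj: "\<And>a r r'. a < length As \<Longrightarrow> r < dim_row (Bs!a) \<Longrightarrow> r' < dim_row (Bs!a) \<Longrightarrow> \<rho> a r = \<rho> a r' \<Longrightarrow> r = r'"
  and ent: "\<And>a r s. a < length As \<Longrightarrow> r < dim_row (Bs!a) \<Longrightarrow> s < dim_col (Bs!a) \<Longrightarrow>
      (Bs!a) $$ (r,s) = (As!a) $$ (\<rho> a r, \<rho> (Suc a mod length As) s)"
  and csne: "cs \<noteq> []" and csd: "distinct cs" and csN: "set cs \<subseteq> {0..<sum_list (map dim_row Bs)}"
  and nz: "\<forall>i<length cs. Gm Bs $$ (cs!i, cs!((i+1) mod length cs)) \<noteq> 0"
  shows "0 \<le> (-1)^(length cs - 1) * (\<Prod>i<length cs. Gm Bs $$ (cs!i, cs!((i+1) mod length cs)))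
     * (-1)^(card {i. i < length cs \<and> fst (lay (map dim_row Bs) (cs!i)) = 0})"
proof -
  define ds where "ds = map dim_row Bs"
  define k where "k = length As"
  define L where "L = length cs"
  define N where "N = sum_list ds"
  define la where "la x = fst (lay ds x)" for x
  define lr where "lr x = snd (lay ds x)" for x
  have Lpos: "L > 0" using csne L_def by simp
  have kp: "k > 0" using kpos k_def by simp
  have csb: "\<And>i. i < L \<Longrightarrow> cs ! i < N" using csN L_def N_def ds_def by (auto simp: set_conv_nth)
  have nxL: "\<And>i. (i + 1) mod L < L" using Lpos by simp
  have lab: "\<And>x. x < N \<Longrightarrow> la x < k \<and> lr x < dim_row (Bs ! la x)"
    using lay_bound len unfolding la_def lr_def N_def ds_def k_def by fastforce
  have colf: "\<And>a. a < k \<Longrightarrow> dim_col (Bs!a) = dim_row (Bs!(Suc a mod k))"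
  proof -
    fix a assume a: "a < k"
    show "dim_col (Bs!a) = dim_row (Bs!(Suc a mod k))"
    proof (cases "Suc a < k")
      case True
      then show ?thesis using ch len unfolding chn_def k_def by simp
    next
      case False
      then have sk: "Suc a = k" using a by simp
      then have "a = k - 1" "Suc a mod k = 0" by auto
      moreover have "Bs \<noteq> []" using len kp k_def by auto
      ultimately show ?thesis using ch len unfolding chn_def k_def
        by (simp add: last_conv_nth hd_conv_nth)
    qed
  qed
  have Gent: "\<And>x y. x < N \<Longrightarrow> y < N \<Longrightarrow> Gm Bs $$ (x, y) =
     (if x = y \<and> la x \<noteq> 0 then 1 else 0) - (if la y = Suc (la x) mod k then (Bs ! la x) $$ (lr x, lr y) else 0)"
    using Gm_entry len unfolding la_def lr_def N_def ds_def k_def by simp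
  have sucne: "\<And>a. a < k \<Longrightarrow> k \<ge> 2 \<Longrightarrow> Suc a mod k \<noteq> a"
    by (metis Suc_lessI mod_less mod_self n_not_Suc_n not_less_zero zero_neq_numeral
        Suc_1 le_antisym less_2_cases_iff not_less)
  show ?thesis
  proof (cases "L = 1 \<and> la (cs!0) \<noteq> 0")
    case True
    have x: "cs ! 0 < N" using csb Lpos by simp
    have k2: "k \<ge> 2" using lab[OF x] True by simp
    have "Gm Bs $$ (cs!0, cs!0) = 1" using Gent[OF x x] sucne[of "la (cs!0)"] lab[OF x] k2 True by simp
    moreover have "{i. i < L \<and> fst (lay ds (cs!i)) = 0} = {}"
    proof -
      have "\<And>i. i < L \<Longrightarrow> fst (lay ds (cs!i)) \<noteq> 0"
      proof -
        fix i assume "i < L" then have "i = 0" using True by simp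
        then show "fst (lay ds (cs!i)) \<noteq> 0" using True unfolding la_def by simp
      qed
      then show ?thesis by blast
    qed
    ultimately have P1: "(\<Prod>i<L. Gm Bs $$ (cs!i, cs!((i+1) mod L))) = 1"
      and C1: "card {i. i < L \<and> fst (lay ds (cs!i)) = 0} = 0" using True by simp_all
    show ?thesis unfolding L_def[symmetric] ds_def[symmetric] P1 C1 using True by simp
  next
    case notA: False
    have E: "\<And>i. i < L \<Longrightarrow> la (cs!((i+1) mod L)) = Suc (la (cs!i)) mod k \<and>
        Gm Bs $$ (cs!i, cs!((i+1) mod L)) = - (Bs ! la (cs!i)) $$ (lr (cs!i), lr (cs!((i+1) mod L)))"
    proof -
      fix i assume i: "i < L"
      let ?x = "cs!i" and ?y = "cs!((i+1) mod L)"
      have x: "?x < N" and y: "?y < N" using csb i nxL by auto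
      have diag0: "\<not> (?x = ?y \<and> la ?x \<noteq> 0)"
      proof
        assume h: "?x = ?y \<and> la ?x \<noteq> 0"
        then have "i = (i+1) mod L" using csd i nxL L_def by (simp add: nth_eq_iff_index_eq)
        then have "L = 1"
        proof (cases "i + 1 < L")
          case True
          then show "i = (i+1) mod L \<Longrightarrow> L = 1" by simp
        next
          case False
          then have "i + 1 = L" using i by simp
          then show "i = (i+1) mod L \<Longrightarrow> L = 1" by simp
        qed
        then show False using notA h i by simp
      qed
      have "Gm Bs $$ (?x, ?y) \<noteq> 0" using nz i L_def by simp
      then show "la ?y = Suc (la ?x) mod k \<and> Gm Bs $$ (?x, ?y) = - (Bs ! la ?x) $$ (lr ?x, lr ?y)"
      proof -
        assume nz0: "Gm Bs $$ (?x, ?y) \<noteq> 0"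
        have g: "Gm Bs $$ (?x, ?y) = - (if la ?y = Suc (la ?x) mod k then (Bs ! la ?x) $$ (lr ?x, lr ?y) else 0)"
          using Gent[OF x y] diag0 by simp
        show ?thesis
        proof (cases "la ?y = Suc (la ?x) mod k")
          case True then show ?thesis using g by simp
        next
          case False then show ?thesis using g nz0 by simp
        qed
      qed
    qed
    define \<phi> where "\<phi> x = (la x, \<rho> (la x) (lr x))" for x
    define vs where "vs = map \<phi> cs"
    define w where "w i = (Bs ! la (cs!i)) $$ (lr (cs!i), lr (cs!((i+1) mod L)))" for i
    have wA: "\<And>i. i < L \<Longrightarrow> sd_weight As (vs!i) (vs!((i+1) mod L)) = w i"
    proof -
      fix i assume i: "i < L"
      let ?x = "cs!i" and ?y = "cs!((i+1) mod L)"
      have x: "?x < N" and y: "?y < N" using csb i nxL by auto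
      have s: "lr ?y < dim_col (Bs ! la ?x)" using lab[OF y] E[OF i] colf lab[OF x] by simp
      show "sd_weight As (vs!i) (vs!((i+1) mod L)) = w i"
        unfolding sd_weight_def vs_def w_def \<phi>_def using i nxL L_def ent[of "la ?x" "lr ?x" "lr ?y"] lab[OF x] s E[OF i] k_def
        by simp
    qed
    have cyc: "sd_cycle As vs"
      unfolding sd_cycle_def
    proof (intro conjI allI impI)
      show "vs \<noteq> []" using csne vs_def by simp
      have "inj_on \<phi> (set cs)"
      proof (rule inj_onI)
        fix x y assume xs: "x \<in> set cs" and ys: "y \<in> set cs" and e: "\<phi> x = \<phi> y"
        have x: "x < N" and y: "y < N" using xs ys csN N_def ds_def by auto
        have "la x = la y" using e \<phi>_def by simp
        moreover have "lr x = lr y" using e \<phi>_def lab[OF x] lab[OF y] vinj k_def calculation by auto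
        ultimately have "lay ds x = lay ds y" unfolding la_def lr_def by (simp add: prod_eq_iff)
        then show "x = y" using lay_inj x y N_def by blast
      qed
      then show "distinct vs" using csd vs_def by (simp add: distinct_map)
      fix i assume i: "i < length vs"
      then have i': "i < L" using vs_def L_def by simp
      let ?x = "cs!i" and ?y = "cs!((i+1) mod L)"
      have x: "?x < N" and y: "?y < N" using csb i' nxL by auto
      have lvs: "length vs = L" using vs_def L_def by simp
      have "w i \<noteq> 0" using E[OF i'] nz i' L_def w_def by auto
      then show "sd_edge As (vs ! i) (vs ! ((i + 1) mod length vs))"
        unfolding sd_edge_def sd_vertex_def using wA[OF i'] lvs i' nxL lab[OF x] lab[OF y] vb k_def E[OF i']
        by (simp add: vs_def \<phi>_def)
    qed
    have odd: "(-1::int) ^ (length vs div length As + sd_neg_edges As vs) \<noteq> 1"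
      using ef cyc unfolding e_cycle_free_def e_cycle_def by blast
    have neg: "sd_neg_edges As vs = card {i. i < L \<and> w i < 0}"
    proof -
      have "{i. i < length vs \<and> sd_weight As (vs ! i) (vs ! ((i + 1) mod length vs)) < 0} = {i. i < L \<and> w i < 0}"
        using wA vs_def L_def by auto
      then show ?thesis unfolding sd_neg_edges_def by simp
    qed
    define a0 where "a0 = la (cs!0)"
    have lay_i: "\<And>i. i < L \<Longrightarrow> la (cs!i) = (a0 + i) mod k"
    proof -
      fix i show "i < L \<Longrightarrow> la (cs!i) = (a0 + i) mod k"
      proof (induction i)
        case 0
        then show ?case using lab csb a0_def by simp
      next
        case (Suc i)
        then have "la (cs!Suc i) = Suc (la (cs!i)) mod k" using E[of i] by simp
        then show ?case using Suc by (simp add: mod_Suc_eq)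
      qed
    qed
    have kdvd: "k dvd L"
    proof -
      have "la (cs!0) = Suc (la (cs!(L-1))) mod k" using E[of "L-1"] Lpos by simp
      also have "\<dots> = (a0 + L) mod k" using lay_i[of "L-1"] Lpos by (simp add: mod_Suc_eq)
      finally have "(a0 + L) mod k = a0 mod k" using a0_def lab csb Lpos by simp
      then have "k dvd (a0 + L) - a0" by (subst mod_eq_dvd_iff_nat[symmetric]) auto
      then show ?thesis by simp
    qed
    have c0: "card {i. i < L \<and> fst (lay ds (cs!i)) = 0} = L div k"
    proof -
      have "{i. i < L \<and> fst (lay ds (cs!i)) = 0} = {i. i < L \<and> (a0 + i) mod k = 0}"
        using lay_i la_def by auto
      then show ?thesis using count_mod[OF kp kdvd] by simp
    qed
    have prodE: "(\<Prod>i<L. Gm Bs $$ (cs!i, cs!((i+1) mod L))) = (-1)^L * (\<Prod>i<L. w i)"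
    proof -
      have "(\<Prod>i<L. Gm Bs $$ (cs!i, cs!((i+1) mod L))) = (\<Prod>i<L. (-1) * w i)"
        using E w_def by (intro prod.cong) auto
      also have "\<dots> = (-1)^L * (\<Prod>i<L. w i)" by (subst prod.distrib) simp
      finally show ?thesis .
    qed
    have sgn: "(-1::real) ^ (L div k + card {i. i < L \<and> w i < 0}) = -1"
    proof -
      have "(-1::int) ^ (L div k + card {i. i < L \<and> w i < 0}) = -1"
        using odd neg vs_def L_def k_def by (simp add: neg_one_even_power neg_one_odd_power)
          (metis neg_one_even_power neg_one_odd_power)
      from arg_cong[where f="real_of_int", OF this] show ?thesis by simp
    qed
    have absnn: "0 \<le> (\<Prod>i<L. \<bar>w i\<bar>)" by (simp add: prod_nonneg)
    have eq1: "(-1)^(L - 1) * (\<Prod>i<L. Gm Bs $$ (cs!i, cs!((i+1) mod L))) * (-1)^(card {i. i < L \<and> fst (lay ds (cs!i)) = 0})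
       = ((-1)^(L - 1) * (-1)^L) * ((-1) ^ (L div k + card {i. i < L \<and> w i < 0})) * (\<Prod>i<L. \<bar>w i\<bar>)"
      unfolding prodE c0 prod_sign_abs[of w L] power_add by (simp only: mult_ac)
    have eq2: "(-1::real)^(L - 1) * (-1)^L = -1"
    proof -
      from Lpos obtain m where Lm: "L = Suc m" by (metis gr0_conv_Suc)
      have "(-1::real)^m * (-1)^m = 1" by (simp add: power_mult_distrib[symmetric])
      then show ?thesis using Lm by simp
    qed
    have "(-1)^(L - 1) * (\<Prod>i<L. Gm Bs $$ (cs!i, cs!((i+1) mod L))) * (-1)^(card {i. i < L \<and> fst (lay ds (cs!i)) = 0})
       = (\<Prod>i<L. \<bar>w i\<bar>)" unfolding eq1 eq2 sgn by simp
    then show ?thesis using absnn unfolding L_def ds_def by simp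
  qed
qed



lemma submatrix_UNIV: "submatrix X UNIV UNIV = X"
  by (intro eq_matI) (auto simp: submatrix_def pick_UNIV)

lemma dim_submatrix_UNIV: "dim_row (submatrix X UNIV J) = dim_row X" "dim_col (submatrix X I UNIV) = dim_col X"
  by (simp_all add: submatrix_def)

lemma submatrix_mult:
  fixes X Y :: "real mat"
  assumes d: "dim_col X = dim_row Y"
  shows "submatrix (X * Y) I J = submatrix X I UNIV * submatrix Y UNIV J"
proof (rule eq_matI)
  fix i j
  assume i: "i < dim_row (submatrix X I UNIV * submatrix Y UNIV J)"
    and j: "j < dim_col (submatrix X I UNIV * submatrix Y UNIV J)"
  have i': "i < card {i. i < dim_row X \<and> i \<in> I}" using i by (simp add: submatrix_def)
  have j': "j < card {j. j < dim_col Y \<and> j \<in> J}" using j by (simp add: submatrix_def)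
  have pi: "pick I i < dim_row X" using pick_le[OF i'] .
  have pj: "pick J j < dim_col Y" using pick_le[OF j'] .
  have "submatrix (X * Y) I J $$ (i, j) = (X * Y) $$ (pick I i, pick J j)"
    using i' j' by (simp add: submatrix_def)
  also have "\<dots> = (\<Sum>l<dim_col X. X $$ (pick I i, l) * Y $$ (l, pick J j))"
    using pi pj d by (simp add: scalar_prod_def atLeast0LessThan)
  also have "\<dots> = (submatrix X I UNIV * submatrix Y UNIV J) $$ (i, j)"
    using i' j' pi pj d by (simp add: submatrix_def scalar_prod_def atLeast0LessThan pick_UNIV)
  finally show "submatrix (X * Y) I J $$ (i, j) = (submatrix X I UNIV * submatrix Y UNIV J) $$ (i, j)" .
qed (simp_all add: submatrix_def)

definition cons_ch :: "real mat list \<Rightarrow> bool" where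
  "cons_ch Xs \<longleftrightarrow> (\<forall>j. Suc j < length Xs \<longrightarrow> dim_col (Xs!j) = dim_row (Xs ! Suc j))"

lemma cons_ch_tl: "cons_ch (X # Xs) \<Longrightarrow> cons_ch Xs"
  unfolding cons_ch_def by (metis Suc_less_eq length_Cons nth_Cons_Suc)

lemma dim_row_foldr: "Xs \<noteq> [] \<Longrightarrow> dim_row (foldr (*) (butlast Xs) (last Xs)) = dim_row (hd Xs)"
  by (induction Xs rule: induct_list012) auto

lemma dim_col_foldr: "dim_col (foldr (*) Xs Y) = (dim_col Y :: nat)"
  for Xs :: "real mat list" by (induction Xs) auto

lemma sub_col_foldr:
  "Xs \<noteq> [] \<Longrightarrow> cons_ch Xs \<Longrightarrow>
   submatrix (foldr (*) (butlast Xs) (last Xs)) UNIV J = foldr (*) (butlast Xs) (submatrix (last Xs) UNIV J)"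
proof (induction Xs rule: induct_list012)
  case (3 X Y rest)
  have ch: "cons_ch (Y # rest)" using cons_ch_tl 3 by blast
  have d: "dim_col X = dim_row (foldr (*) (butlast (Y # rest)) (last (Y # rest)))"
    using dim_row_foldr[of "Y # rest"] 3(4) unfolding cons_ch_def by (metis Suc_eq_plus1 list.sel(1) nth_Cons_0
      nth_Cons_Suc length_Cons zero_less_Suc less_Suc_eq_0_disj list.distinct(1) add_0 Suc_less_eq zero_less_Suc)
  have "submatrix (foldr (*) (butlast (X # Y # rest)) (last (X # Y # rest))) UNIV J
      = submatrix (X * foldr (*) (butlast (Y # rest)) (last (Y # rest))) UNIV J" by simp
  also have "\<dots> = X * submatrix (foldr (*) (butlast (Y # rest)) (last (Y # rest))) UNIV J"
    using submatrix_mult[OF d, of UNIV J] unfolding submatrix_UNIV .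
  also have "\<dots> = X * foldr (*) (butlast (Y # rest)) (submatrix (last (Y # rest)) UNIV J)"
    using 3(2) ch by simp
  finally show ?case by simp
qed auto

lemma sub_row_foldr:
  "cons_ch (X # Xs) \<Longrightarrow>
   submatrix (foldr (*) (butlast (X # Xs)) (last (X # Xs))) I UNIV
     = foldr (*) (butlast (submatrix X I UNIV # Xs)) (last (submatrix X I UNIV # Xs))"
proof (cases Xs)
  case Nil then show ?thesis by simp
next
  case (Cons Y rest)
  assume ch: "cons_ch (X # Xs)"
  have d: "dim_col X = dim_row (foldr (*) (butlast (Y # rest)) (last (Y # rest)))"
    using dim_row_foldr[of "Y # rest"] ch Cons unfolding cons_ch_def by fastforce
  have e: "submatrix (X * foldr (*) (butlast (Y # rest)) (last (Y # rest))) I UNIV =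
     submatrix X I UNIV * foldr (*) (butlast (Y # rest)) (last (Y # rest))"
    using submatrix_mult[OF d, of I UNIV] unfolding submatrix_UNIV .
  have "foldr (*) (butlast (X # Xs)) (last (X # Xs)) = X * foldr (*) (butlast (Y # rest)) (last (Y # rest))"
    using Cons by simp
  moreover have "foldr (*) (butlast (submatrix X I UNIV # Xs)) (last (submatrix X I UNIV # Xs)) =
     submatrix X I UNIV * foldr (*) (butlast (Y # rest)) (last (Y # rest))"
    using Cons by simp
  ultimately show ?thesis using e by simp
qed



lemma foldr_one:
  fixes Xs :: "real mat list"
  shows "Xs \<noteq> [] \<Longrightarrow> dim_col (last Xs) = n \<Longrightarrow> foldr (*) Xs (1\<^sub>m n) = foldr (*) (butlast Xs) (last Xs)"
  by (induction Xs rule: induct_list012) auto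

lemma submatrix_index':
  "r < dim_row (submatrix X I J) \<Longrightarrow> s < dim_col (submatrix X I J) \<Longrightarrow>
   submatrix X I J $$ (r, s) = X $$ (pick I r, pick J s)"
  by (simp add: submatrix_def)

theorem theorem1:
  fixes As :: "real mat list"
  assumes "cyclic_chain As"
    and "e_cycle_free As"
  shows "P0_matrix (foldr (*) As (1\<^sub>m (dim_row (As ! 0))))"
proof -
  define k where "k = length As"
  define n0 where "n0 = dim_row (As ! 0)"
  define P where "P = foldr (*) As (1\<^sub>m n0)"
  have kpos: "k > 0" using assms(1) k_def unfolding cyclic_chain_def by auto
  have Ane: "As \<noteq> []" using kpos k_def by auto
  have cc: "\<And>j. j < k \<Longrightarrow> dim_col (As ! j) = dim_row (As ! ((j + 1) mod k))"
    using assms(1) k_def unfolding cyclic_chain_def by simp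
  have lastcol: "dim_col (As ! (k - 1)) = n0"
  proof -
    have "(k - 1 + 1) mod k = 0" using kpos by simp
    then show ?thesis using cc[of "k-1"] kpos n0_def by simp
  qed
  have lastAs: "last As = As ! (k - 1)" using Ane k_def by (simp add: last_conv_nth)
  have consAs: "cons_ch As" unfolding cons_ch_def
  proof (intro allI impI)
    fix j assume j: "Suc j < length As"
    then have "(j + 1) mod k = Suc j" using k_def by simp
    then show "dim_col (As ! j) = dim_row (As ! Suc j)" using cc[of j] j k_def by simp
  qed
  have Pfold: "P = foldr (*) (butlast As) (last As)"
    unfolding P_def using foldr_one[OF Ane, of n0] lastcol lastAs by simp
  have rowP: "dim_row P = n0"
    using Pfold dim_row_foldr[OF Ane] hd_conv_nth[OF Ane] n0_def by simp
  have colP: "dim_col P = n0" unfolding P_def using dim_col_foldr[of As "1\<^sub>m n0"] by simp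
  have "P0_matrix P"
    unfolding P0_matrix_def
  proof (intro conjI allI impI)
    show "P \<in> carrier_mat (dim_row P) (dim_row P)" by (rule carrier_matI[OF refl]) (simp only: rowP colP)
    fix I assume "I \<subseteq> {0..<dim_row P}"
    then have Isub: "I \<subseteq> {0..<n0}" using rowP by simp
    have Ieq: "{i. i < n0 \<and> i \<in> I} = I" using Isub by auto
    define m0 where "m0 = card I"
    define C where "C = As[k - 1 := submatrix (As ! (k - 1)) UNIV I]"
    define Bs where "Bs = C[0 := submatrix (C ! 0) I UNIV]"
    have lenC: "length C = k" and lenB: "length Bs = k" using C_def Bs_def k_def by simp_all
    have nthC: "\<And>a. a < k \<Longrightarrow> C ! a = (if a = k - 1 then submatrix (As ! a) UNIV I else As ! a)"
      using C_def k_def by simp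
    have nthB: "\<And>a. a < k \<Longrightarrow> Bs ! a = (if a = 0 then submatrix (C ! 0) I UNIV else C ! a)"
      using Bs_def lenC by simp
    have rowC: "\<And>a. a < k \<Longrightarrow> dim_row (C ! a) = dim_row (As ! a)"
      using nthC by (simp add: dim_submatrix_UNIV)
    have colC: "\<And>a. a < k \<Longrightarrow> dim_col (C ! a) = (if a = k - 1 then m0 else dim_col (As ! a))"
      using nthC lastcol Ieq m0_def by (auto simp: dim_submatrix)
    have rowB: "\<And>a. a < k \<Longrightarrow> dim_row (Bs ! a) = (if a = 0 then m0 else dim_row (As ! a))"
      using nthB rowC Ieq m0_def n0_def kpos by (auto simp: dim_submatrix)
    have colB: "\<And>a. a < k \<Longrightarrow> dim_col (Bs ! a) = (if a = k - 1 then m0 else dim_col (As ! a))"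
      using nthB colC kpos by (auto simp: dim_submatrix_UNIV)
    have subP: "submatrix P I I = foldr (*) (butlast Bs) (last Bs)"
    proof -
      obtain As' Al where AsA: "As = As' @ [Al]" using Ane rev_exhaust by blast
      have klen: "k - 1 = length As'" using AsA k_def by simp
      have CA: "C = As' @ [submatrix Al UNIV I]"
        using C_def klen AsA by (simp add: list_update_append)
      have "submatrix P UNIV I = foldr (*) (butlast As) (submatrix (last As) UNIV I)"
        unfolding Pfold using sub_col_foldr[OF Ane consAs] .
      also have "\<dots> = foldr (*) (butlast C) (last C)" using AsA CA by simp
      finally have sPc: "submatrix P UNIV I = foldr (*) (butlast C) (last C)" .
      obtain c0 Cr where C0: "C = c0 # Cr" using lenC kpos by (cases C) auto
      have consC: "cons_ch C" unfolding cons_ch_def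
      proof (intro allI impI)
        fix j assume j: "Suc j < length C"
        then have "j \<noteq> k - 1" "Suc j < k" using lenC by auto
        then show "dim_col (C ! j) = dim_row (C ! Suc j)" using colC rowC cc by simp
      qed
      have BsC: "Bs = submatrix c0 I UNIV # Cr" using Bs_def C0 by simp
      have "submatrix P I I = submatrix (submatrix P UNIV I) I UNIV" by (rule submatrix_split)
      also have "\<dots> = foldr (*) (butlast Bs) (last Bs)"
        unfolding sPc BsC using sub_row_foldr[of c0 Cr I] consC C0 by simp
      finally show ?thesis .
    qed
    have chB: "chn Bs" unfolding chn_def
    proof (intro conjI allI impI)
      fix j assume j: "Suc j < length Bs"
      then have "j \<noteq> k - 1" "Suc j < k" using lenB by auto
      then show "dim_col (Bs ! j) = dim_row (Bs ! Suc j)" using colB rowB cc by simp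
    next
      have Bne': "Bs \<noteq> []" using lenB kpos by auto
      have "last Bs = Bs ! (k - 1)" using lenB last_conv_nth[OF Bne'] by simp
      moreover have "hd Bs = Bs ! 0" using hd_conv_nth[OF Bne'] by simp
      ultimately show "dim_col (last Bs) = dim_row (hd Bs)" using colB rowB kpos by simp
    qed
    define \<rho> where "\<rho> a r = (if a = 0 then pick I r else r)" for a r :: nat
    have vb: "\<And>a r. a < length As \<Longrightarrow> r < dim_row (Bs!a) \<Longrightarrow> \<rho> a r < dim_row (As!a)"
    proof -
      fix a r assume a: "a < length As" and r: "r < dim_row (Bs!a)"
      show "\<rho> a r < dim_row (As!a)"
      proof (cases "a = 0")
        case True
        then have "r < card {i. i < n0 \<and> i \<in> I}" using r rowB a k_def Ieq m0_def by simp
        then show ?thesis using pick_le True \<rho>_def n0_def by simp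
      next
        case False then show ?thesis using r rowB a k_def \<rho>_def by simp
      qed
    qed
    have finI: "finite I" using Isub finite_subset by blast
    have vinj: "\<And>a r r'. a < length As \<Longrightarrow> r < dim_row (Bs!a) \<Longrightarrow> r' < dim_row (Bs!a) \<Longrightarrow> \<rho> a r = \<rho> a r' \<Longrightarrow> r = r'"
    proof -
      fix a r r' assume a: "a < length As" and r: "r < dim_row (Bs!a)" and r': "r' < dim_row (Bs!a)"
        and e: "\<rho> a r = \<rho> a r'"
      show "r = r'"
      proof (cases "a = 0")
        case True
        then have rr: "r < card I" "r' < card I" using r r' rowB a k_def m0_def by auto
        have "pick I r = pick I r'" using e True \<rho>_def by simp
        then show ?thesis using pick_mono_le[OF rr(1)] pick_mono_le[OF rr(2)]
          by (metis less_irrefl nat_neq_iff)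
      next
        case False then show ?thesis using e \<rho>_def by simp
      qed
    qed
    have ent: "\<And>a r s. a < length As \<Longrightarrow> r < dim_row (Bs!a) \<Longrightarrow> s < dim_col (Bs!a) \<Longrightarrow>
      (Bs!a) $$ (r,s) = (As!a) $$ (\<rho> a r, \<rho> (Suc a mod length As) s)"
    proof -
      fix a r s assume a: "a < length As" and r: "r < dim_row (Bs!a)" and s: "s < dim_col (Bs!a)"
      have ak: "a < k" using a k_def by simp
      have sm: "(Suc a mod k = 0) = (a = k - 1)" using ak
        by (metis Suc_pred' kpos less_Suc_eq mod_less mod_self nat.distinct(1) not_less_eq)
      have rhoS: "\<rho> (Suc a mod length As) s = (if a = k - 1 then pick I s else s)"
        using sm \<rho>_def k_def by simp
      show "(Bs!a) $$ (r,s) = (As!a) $$ (\<rho> a r, \<rho> (Suc a mod length As) s)"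
      proof (cases "a = 0")
        case a0: True
        have B0: "Bs ! a = submatrix (C ! 0) I UNIV" using nthB ak a0 by simp
        have e1: "(Bs ! a) $$ (r, s) = (C ! 0) $$ (pick I r, s)"
          using r s unfolding B0 by (simp add: submatrix_index' pick_UNIV)
        have pr: "pick I r < dim_row (C ! 0)"
          using vb[OF a r] a0 \<rho>_def rowC kpos by simp
        have sc: "s < dim_col (C ! 0)" using s B0 a0 by (simp add: dim_submatrix_UNIV)
        show ?thesis
        proof (cases "k - 1 = 0")
          case True
          have "C ! 0 = submatrix (As ! 0) UNIV I" using nthC kpos True by simp
          then have "(C ! 0) $$ (pick I r, s) = (As ! 0) $$ (pick I r, pick I s)"
            using pr sc by (simp add: submatrix_index' pick_UNIV)
          then show ?thesis using e1 a0 rhoS True \<rho>_def by simp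
        next
          case False
          have "C ! 0 = As ! 0" using nthC kpos False by simp
          then show ?thesis using e1 a0 rhoS False \<rho>_def by simp
        qed
      next
        case an0: False
        have Ba: "Bs ! a = C ! a" using nthB ak an0 by simp
        show ?thesis
        proof (cases "a = k - 1")
          case True
          have Ca: "C ! a = submatrix (As ! a) UNIV I" using nthC ak True by simp
          have "(Bs ! a) $$ (r, s) = (As ! a) $$ (r, pick I s)"
            using r s unfolding Ba Ca by (simp add: submatrix_index' pick_UNIV)
          then show ?thesis using rhoS True an0 \<rho>_def by simp
        next
          case False
          then show ?thesis using Ba nthC ak rhoS an0 \<rho>_def by simp
        qed
      qed
    qed
    have Bne: "Bs \<noteq> []" using lenB kpos by auto
    have hdB: "dim_row (hd Bs) = m0" using rowB kpos hd_conv_nth[OF Bne] by simp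
    have dG: "det (Gm Bs) = (-1) ^ m0 * det (submatrix P I I)"
      using det_Gm[OF chB Bne] hdB subP by simp
    define N where "N = sum_list (map dim_row Bs)"
    define g where "g x = (fst (lay (map dim_row Bs) x) = 0)" for x
    have cardg: "card {x \<in> {0..<N}. g x} = m0"
    proof -
      have "{x \<in> {0..<N}. g x} = {i. i < sum_list (map dim_row Bs) \<and> fst (lay (map dim_row Bs) i) = 0}"
        using N_def g_def by auto
      then show ?thesis using lay0_card[of "map dim_row Bs"] Bne hdB by (simp add: hd_map)
    qed
    have terms: "\<And>p. p permutes {0..<N} \<Longrightarrow>
        0 \<le> of_int (sign p) * (\<Prod>x\<in>{0..<N}. Gm Bs $$ (x, p x)) * (-1)^m0"
    proof -
      fix p :: "nat \<Rightarrow> nat" assume p: "p permutes {0..<N}"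
      have "0 \<le> of_int (sign p) * (\<Prod>x\<in>{0..<N}. (\<lambda>x y. Gm Bs $$ (x, y)) x (p x)) * (-1)^(card {x\<in>{0..<N}. g x})"
      proof (rule termwise_sign[OF _ p])
        show "finite {0..<N}" by simp
        fix cs :: "nat list"
        assume "cs \<noteq> []" "distinct cs" "set cs \<subseteq> {0..<N}"
          "\<forall>i<length cs. Gm Bs $$ (cs!i, cs!((i+1) mod length cs)) \<noteq> 0"
        then show "0 \<le> (-1)^(length cs - 1) * (\<Prod>i<length cs. Gm Bs $$ (cs!i, cs!((i+1) mod length cs)))
          * (-1)^(card {i. i < length cs \<and> g (cs!i)})"
          using cycle_cond[OF assms(2) _ _ chB vb vinj ent] lenB k_def kpos N_def g_def by simp
      qed
      then show "0 \<le> of_int (sign p) * (\<Prod>x\<in>{0..<N}. Gm Bs $$ (x, p x)) * (-1)^m0"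
        using cardg by simp
    qed
    have GmC: "Gm Bs \<in> carrier_mat N N" using Gm_carrier N_def by simp
    have "det (Gm Bs) * (-1)^m0 = (\<Sum>p \<in> {p. p permutes {0..<N}}. of_int (sign p) * (\<Prod>x\<in>{0..<N}. Gm Bs $$ (x, p x)) * (-1)^m0)"
      unfolding det_def'[OF GmC] by (simp add: sum_distrib_right)
    also have "\<dots> \<ge> 0" using terms by (intro sum_nonneg) auto
    finally have "0 \<le> det (Gm Bs) * (-1)^m0" .
    also have "det (Gm Bs) * (-1)^m0 = det (submatrix P I I)"
      unfolding dG by (simp add: power_mult_distrib[symmetric] mult.assoc[symmetric])
    finally show "0 \<le> det (submatrix P I I)" .
  qed
  then show ?thesis unfolding P_def n0_def .
qed

end
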